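(* Let $R,T,N,\sigma$ be real numbers with $T\ge3$, $R,N\ge1$, $\sigma\ge\frac12$, let $j$ be a positive integer, and let $(a_n)$ be any sequence of complex numbers. Then for every $\varepsilon>0$, $$\sum_{q\le R}\ \sum_{\substack{\chi\bmod qj\\ \chi\ne\chi_0}}\Bigg(\int_{-T}^{T}\Bigg|\sum_{n\le N}\frac{a_n\chi(n)}{n^{\sigma+it}}\Bigg|\,dt\Bigg)^2\ll_\varepsilon(jRNT)^\varepsilon\,(RNT+jR^2T^2)\sum_{n\le N}\frac{|a_n|^2}{n^{2\sigma}},$$ where the inner sum is over all non-principal Dirichlet characters $\chi$ modulo $qj$, and the implied constant depends only on $\varepsilon$. *)

theory Defs
  imports "HOL-Analysis.Analysis"
begin

definition dirichlet_char :: "nat \<Rightarrow> (nat \<Rightarrow> complex) \<Rightarrow> bool" where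
  "dirichlet_char q chi \<longleftrightarrow> q \<ge> 1 \<and>
     (\<forall>m n. chi (m * n) = chi m * chi n) \<and>
     (\<forall>n. chi (n + q) = chi n) \<and>
     (\<forall>n. chi n \<noteq> 0 \<longleftrightarrow> coprime n q)"

definition principal_char :: "nat \<Rightarrow> nat \<Rightarrow> complex" where
  "principal_char q n = (if coprime n q then 1 else 0)"

end

theory Submission
  imports Defs "HOL-Number_Theory.Number_Theory"
begin


lemma dc_one: assumes "dirichlet_char m chi" shows "chi 1 = 1"
proof -
  have "chi 1 = chi 1 * chi 1" using assms unfolding dirichlet_char_def by (metis mult_1)
  moreover have "chi 1 \<noteq> 0" using assms unfolding dirichlet_char_def by auto
  ultimately show ?thesis by (metis mult_cancel_left2)
qed

lemma dc_periodic: assumes "dirichlet_char m chi" shows "chi (n + k*m) = chi n"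
proof (induction k)
  case (Suc k) then show ?case using assms unfolding dirichlet_char_def
    by (metis add.assoc add.commute mult_Suc)
qed simp

lemma dc_mod: assumes "dirichlet_char m chi" shows "chi n = chi (n mod m)"
  using dc_periodic[OF assms, of "n mod m" "n div m"] by simp

lemma dc_pow: assumes "dirichlet_char m chi" shows "chi (n^k) = chi n ^ k"
  by (induction k) (use assms dc_one in \<open>auto simp: dirichlet_char_def\<close>)

lemma dc_norm: assumes "dirichlet_char m chi" "coprime r m" shows "cmod (chi r) = 1"
proof -
  have m: "m \<ge> 1" using assms unfolding dirichlet_char_def by auto
  have "[r ^ totient m = 1] (mod m)" using euler_theorem assms(2) by blast
  hence "(r ^ totient m) mod m = 1 mod m" by (simp add: cong_def)
  hence "chi (r ^ totient m) = chi 1" using dc_mod[OF assms(1), of "r ^ totient m"] dc_mod[OF assms(1), of 1] by simp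
  hence "chi r ^ totient m = 1" using dc_pow[OF assms(1)] dc_one[OF assms(1)] by simp
  hence "cmod (chi r) ^ totient m = 1" by (metis norm_one norm_power)
  moreover have "totient m > 0" using m by simp
  ultimately show ?thesis using power_eq_imp_eq_base[of "cmod (chi r)" "totient m" 1] by simp
qed

lemma dc_zero: assumes "dirichlet_char m chi" "\<not> coprime r m" shows "chi r = 0"
  using assms unfolding dirichlet_char_def by auto

lemma dc_orth:
  assumes "dirichlet_char m chi" "dirichlet_char m psi" "chi \<noteq> psi"
  shows "(\<Sum>r<m. chi r * cnj (psi r)) = 0"
proof -
  have m: "m \<ge> 1" using assms unfolding dirichlet_char_def by auto
  obtain n where n: "chi n \<noteq> psi n" using assms(3) by auto
  define a where "a = n mod m"
  have a: "chi a \<noteq> psi a" using n dc_mod assms unfolding a_def by metis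
  have cop: "coprime a m" using a dc_zero assms(1,2) by metis
  define S where "S = (\<Sum>r<m. chi r * cnj (psi r))"
  have bij: "bij_betw (\<lambda>r. (a*r) mod m) {..<m} {..<m}"
  proof -
    have "inj_on (\<lambda>r. (a*r) mod m) {..<m}"
    proof (rule inj_onI)
      fix x y assume xy: "x \<in> {..<m}" "y \<in> {..<m}" "(a*x) mod m = (a*y) mod m"
      hence "[a*x = a*y] (mod m)" by (simp add: cong_def)
      hence "[x = y] (mod m)" using cop by (metis cong_mult_lcancel_nat)
      thus "x = y" using xy by (simp add: cong_def)
    qed
    moreover have "(\<lambda>r. (a*r) mod m) ` {..<m} \<subseteq> {..<m}" using m by auto
    ultimately show ?thesis by (simp add: bij_betw_def card_image endo_inj_surj)
  qed
  have "S = (\<Sum>r<m. chi ((a*r) mod m) * cnj (psi ((a*r) mod m)))"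
    unfolding S_def using sum.reindex_bij_betw[OF bij, of "\<lambda>r. chi r * cnj (psi r)"] by simp
  also have "\<dots> = (\<Sum>r<m. chi (a*r) * cnj (psi (a*r)))"
    using dc_mod assms by metis
  also have "\<dots> = chi a * cnj (psi a) * S"
  proof -
    have mul: "\<And>x y. chi (x*y) = chi x * chi y" "\<And>x y. psi (x*y) = psi x * psi y"
      using assms unfolding dirichlet_char_def by blast+
    show ?thesis unfolding S_def sum_distrib_left
      by (rule sum.cong) (simp_all add: mul)
  qed
  finally have eq: "S = chi a * cnj (psi a) * S" .
  have "chi a * cnj (psi a) \<noteq> 1"
  proof
    assume h: "chi a * cnj (psi a) = 1"
    have "psi a * cnj (psi a) = 1"
      using dc_norm[OF assms(2) cop] by (metis complex_norm_square mult.commute of_real_1 power_one)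
    with h have "chi a * cnj (psi a) = psi a * cnj (psi a)" by simp
    moreover have "cnj (psi a) \<noteq> 0" using dc_norm[OF assms(2) cop] by auto
    ultimately show False using a by simp
  qed
  with eq show ?thesis unfolding S_def by (metis mult_cancel_right1 mult.commute)
qed

lemma dc_self:
  assumes "dirichlet_char m chi"
  shows "(\<Sum>r<m. chi r * cnj (chi r)) = of_nat (card {r\<in>{..<m}. coprime r m})"
proof -
  have "(\<Sum>r<m. chi r * cnj (chi r)) = (\<Sum>r<m. if coprime r m then 1 else 0)"
  proof (rule sum.cong)
    fix r assume "r \<in> {..<m}"
    show "chi r * cnj (chi r) = (if coprime r m then 1 else 0)"
    proof (cases "coprime r m")
      case True
      have "chi r * cnj (chi r) = of_real (cmod (chi r)^2)" by (rule complex_norm_square[symmetric])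
      then show ?thesis using dc_norm[OF assms True] True by simp
    qed (use dc_zero[OF assms] in simp)
  qed simp
  also have "\<dots> = of_nat (card {r\<in>{..<m}. coprime r m})"
    by (simp add: sum.If_cases Int_def)
  finally show ?thesis .
qed

lemma card_cop_bounds: assumes "m \<ge> 1"
  shows "1 \<le> card {r\<in>{..<m}. coprime r m}" "card {r\<in>{..<m}. coprime r m} \<le> m"
proof -
  have "card {r\<in>{..<m}. coprime r m} \<le> card {..<m}" by (rule card_mono) auto
  thus "card {r\<in>{..<m}. coprime r m} \<le> m" by simp
  have "(if m = 1 then 0 else 1) \<in> {r\<in>{..<m}. coprime r m}" using assms by auto
  hence "{r\<in>{..<m}. coprime r m} \<noteq> {}" by blast
  thus "1 \<le> card {r\<in>{..<m}. coprime r m}" by (simp add: Suc_le_eq card_gt_0_iff)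
qed



lemma cmod_diff_sq: "cmod (x - y)^2 = cmod x ^2 - 2 * Re (x * cnj y) + cmod y ^2"
  unfolding cmod_power2 by (simp add: power2_eq_square algebra_simps)

lemma bessel:
  assumes X: "finite X" and chars: "\<And>chi. chi \<in> X \<Longrightarrow> dirichlet_char m chi" and m: "m \<ge> 1"
  shows "(\<Sum>chi\<in>X. cmod (\<Sum>r<m. chi r * v r)^2) \<le> real m * (\<Sum>r<m. cmod (v r)^2)"
proof -
  define c where "c = card {r\<in>{..<m}. coprime r m}"
  define a where "a chi = (\<Sum>r<m. chi r * v r)" for chi
  define w where "w r = (\<Sum>chi\<in>X. cnj (a chi) * chi r)" for r
  define A where "A = (\<Sum>chi\<in>X. cmod (a chi)^2)"
  define V where "V = (\<Sum>r<m. cmod (v r)^2)"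
  have c1: "1 \<le> c" and cm: "c \<le> m" using card_cop_bounds[OF m] unfolding c_def by auto
  have inner: "(\<Sum>r<m. chi r * cnj (psi r)) = (if chi = psi then of_nat c else 0)"
    if "chi \<in> X" "psi \<in> X" for chi psi
    using dc_orth[OF chars[OF that(1)] chars[OF that(2)]] dc_self[OF chars[OF that(1)]]
    unfolding c_def by auto
  have sq: "of_real (cmod z ^2) = z * cnj z" for z by (rule complex_norm_square)
  have e1: "(\<Sum>r<m. v r * w r) = of_real A"
  proof -
    have "(\<Sum>r<m. v r * w r) = (\<Sum>chi\<in>X. cnj (a chi) * (\<Sum>r<m. chi r * v r))"
      unfolding w_def sum_distrib_left
      by (subst sum.swap) (simp add: algebra_simps)
    also have "\<dots> = (\<Sum>chi\<in>X. of_real (cmod (a chi)^2))"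
      unfolding a_def[symmetric] sq by (simp add: mult.commute)
    finally show ?thesis unfolding A_def by simp
  qed
  have e2: "(of_real (\<Sum>r<m. cmod (w r)^2) :: complex) = of_nat c * of_real A"
  proof -
    have "of_real (\<Sum>r<m. cmod (w r)^2) = (\<Sum>r<m. w r * cnj (w r))"
      unfolding of_real_sum sq by (rule refl)
    also have "\<dots> = (\<Sum>r<m. \<Sum>chi\<in>X. \<Sum>psi\<in>X. cnj (a chi) * a psi * (chi r * cnj (psi r)))"
      unfolding w_def cnj_sum sum_product by (simp add: algebra_simps)
    also have "\<dots> = (\<Sum>chi\<in>X. \<Sum>psi\<in>X. cnj (a chi) * a psi * (\<Sum>r<m. chi r * cnj (psi r)))"
      by (simp add: sum_distrib_left sum.swap[of _ "{..<m}"])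
    also have "\<dots> = (\<Sum>chi\<in>X. \<Sum>psi\<in>X. cnj (a chi) * a psi * (if chi = psi then of_nat c else 0))"
      using inner by (intro sum.cong refl) auto
    also have "\<dots> = (\<Sum>chi\<in>X. of_nat c * (a chi * cnj (a chi)))"
      using X by (simp add: if_distrib sum.delta algebra_simps cong: if_cong)
    also have "\<dots> = of_nat c * of_real A"
      unfolding A_def sq[symmetric] of_real_sum sum_distrib_left by (rule refl)
    finally show ?thesis .
  qed
  have e2': "(\<Sum>r<m. cmod (w r)^2) = real c * A"
    using e2 by (metis of_real_eq_iff of_real_mult of_real_of_nat_eq)
  have "0 \<le> (\<Sum>r<m. cmod (of_nat c * v r - cnj (w r))^2)" by (simp add: sum_nonneg)
  also have "\<dots> = (\<Sum>r<m. real c ^2 * cmod (v r)^2 - 2 * real c * Re (v r * w r) + cmod (w r)^2)"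
    unfolding cmod_diff_sq by (simp add: norm_mult power_mult_distrib mult.assoc)
  also have "\<dots> = real c^2 * V - 2 * real c * Re (\<Sum>r<m. v r * w r) + (\<Sum>r<m. cmod (w r)^2)"
    unfolding V_def by (simp add: sum.distrib sum_subtractf sum_distrib_left Re_sum del: times_complex.sel)
  also have "\<dots> = real c^2 * V - real c * A"
    unfolding e1 e2' by simp
  finally have "real c * A \<le> real c * (real c * V)" by (simp add: power2_eq_square)
  hence "A \<le> real c * V" using c1 by simp
  also have "\<dots> \<le> real m * V" using cm unfolding V_def by (intro mult_right_mono sum_nonneg) auto
  finally show ?thesis unfolding A_def V_def a_def .
qed



definition K :: "real \<Rightarrow> real \<Rightarrow> real" where
  "K T l = (if l = 0 then 2*T else 2 * sin (l*T) / l)"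

lemma int_cos: fixes l T :: real assumes "T > 0"
  shows "((\<lambda>t. cos (l*t)) has_integral K T l) {-T..T}"
proof (cases "l = 0")
  case True
  then show ?thesis using has_integral_const_real[of "1::real" "-T" T] assms by (simp add: K_def)
next
  case False
  have d: "((\<lambda>t. sin (l*t) / l) has_vector_derivative cos (l*t)) (at t within {-T..T})" for t
  proof -
    have "((\<lambda>t. sin (l*t) / l) has_real_derivative (cos (l*t) * l / l)) (at t within {-T..T})"
      by (auto intro!: derivative_eq_intros)
    thus ?thesis using False by (simp add: has_real_derivative_iff_has_vector_derivative)
  qed
  have "((\<lambda>t. cos (l*t)) has_integral (sin (l*T)/l - sin (l*(-T))/l)) {-T..T}"
    by (rule fundamental_theorem_of_calculus) (use assms d in auto)
  then show ?thesis using False by (simp add: K_def)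
qed

lemma int_sin: fixes l T :: real assumes "T > 0"
  shows "((\<lambda>t. sin (l*t)) has_integral 0) {-T..T}"
proof (cases "l = 0")
  case True
  then show ?thesis by simp
next
  case False
  have d: "((\<lambda>t. - cos (l*t) / l) has_vector_derivative sin (l*t)) (at t within {-T..T})" for t
  proof -
    have "((\<lambda>t. - cos (l*t) / l) has_real_derivative (sin (l*t) * l / l)) (at t within {-T..T})"
      by (auto intro!: derivative_eq_intros)
    thus ?thesis using False by (simp add: has_real_derivative_iff_has_vector_derivative)
  qed
  have "((\<lambda>t. sin (l*t)) has_integral (- cos (l*T)/l - (- cos (l*(-T))/l))) {-T..T}"
    by (rule fundamental_theorem_of_calculus) (use assms d in auto)
  then show ?thesis by simp
qed

lemma K_bound: "l \<noteq> 0 \<Longrightarrow> \<bar>K T l\<bar> \<le> 2 / \<bar>l\<bar>"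
  unfolding K_def by (simp add: abs_sin_le_one divide_right_mono abs_mult)



definition H :: "nat \<Rightarrow> real" where "H M = (\<Sum>k\<in>{1..M}. 1 / real k)"

lemma H_le: "M \<ge> 1 \<Longrightarrow> H M \<le> 1 + ln (real M)"
proof (induction M rule: dec_induct)
  case base then show ?case by (simp add: H_def)
next
  case (step M)
  have "H (Suc M) = H M + 1 / real (Suc M)" unfolding H_def by simp
  also have "1 / real (Suc M) \<le> ln (real (Suc M)) - ln (real M)"
  proof -
    have "ln (real M / real (Suc M)) \<le> real M / real (Suc M) - 1"
      using step by (intro ln_le_minus_one) auto
    also have "\<dots> = - 1 / real (Suc M)" by (simp add: field_simps)
    finally show ?thesis using step by (simp add: ln_div)
  qed
  finally show ?case using step.IH by linarith
qed

lemma H_nonneg: "0 \<le> H M" unfolding H_def by (auto intro: sum_nonneg)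

lemma H_mono: "M \<le> M' \<Longrightarrow> H M \<le> H M'"
  unfolding H_def by (intro sum_mono2) auto

lemma half_sum:
  fixes k0 M :: nat assumes "k0 \<le> M"
  shows "(\<Sum>k\<in>{0..M}. if k = k0 then 0 else 1 / \<bar>real k0 - real k\<bar>) \<le> 2 * H M"
proof -
  define f where "f k = (if k = k0 then 0 else 1 / \<bar>real k0 - real k\<bar>)" for k
  have split: "{0..M} = {..<k0} \<union> {k0..M}" using assms by auto
  have s1: "(\<Sum>k\<in>{..<k0}. f k) \<le> H M"
  proof -
    have inj: "inj_on (\<lambda>d. k0 - d) {1..k0}" by (rule inj_onI) auto
    have img: "(\<lambda>d. k0 - d) ` {1..k0} = {..<k0}"
    proof
      show "{..<k0} \<subseteq> (\<lambda>d. k0 - d) ` {1..k0}"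
      proof
        fix k assume "k \<in> {..<k0}"
        hence "k = k0 - (k0 - k)" "k0 - k \<in> {1..k0}" by auto
        thus "k \<in> (\<lambda>d. k0 - d) ` {1..k0}" by blast
      qed
    qed auto
    have "(\<Sum>k\<in>{..<k0}. f k) = (\<Sum>d\<in>{1..k0}. f (k0 - d))"
      using sum.reindex[OF inj, of f] img by simp
    also have "\<dots> = (\<Sum>d\<in>{1..k0}. 1 / real d)"
    proof (rule sum.cong)
      fix d assume d: "d \<in> {1..k0}"
      hence "k0 - d \<noteq> k0" "real k0 - real (k0 - d) = real d" by (auto simp: of_nat_diff)
      thus "f (k0 - d) = 1 / real d" unfolding f_def by simp
    qed simp
    also have "\<dots> \<le> H M" unfolding H_def using assms by (intro sum_mono2) auto
    finally show ?thesis .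
  qed
  have s2: "(\<Sum>k\<in>{k0..M}. f k) \<le> H M"
  proof -
    have "{k0..M} = insert k0 ((\<lambda>d. k0 + d) ` {1..M-k0})"
    proof
      show "{k0..M} \<subseteq> insert k0 ((\<lambda>d. k0 + d) ` {1..M-k0})"
      proof
        fix k assume k: "k \<in> {k0..M}"
        show "k \<in> insert k0 ((\<lambda>d. k0 + d) ` {1..M-k0})"
        proof (cases "k = k0")
          case False
          hence "k = k0 + (k - k0)" "k - k0 \<in> {1..M-k0}" using k by auto
          thus ?thesis by blast
        qed simp
      qed
    qed (use assms in auto)
    hence "(\<Sum>k\<in>{k0..M}. f k) = f k0 + (\<Sum>k\<in>(\<lambda>d. k0 + d) ` {1..M-k0}. f k)"
      by (simp add: sum.insert_if)
    also have "\<dots> = (\<Sum>d\<in>{1..M-k0}. f (k0 + d))"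
      using sum.reindex[of "\<lambda>d. k0 + d" "{1..M-k0}" f] by (simp add: inj_on_def f_def)
    also have "\<dots> = (\<Sum>d\<in>{1..M-k0}. 1 / real d)"
      by (rule sum.cong) (auto simp: f_def)
    also have "\<dots> \<le> H M" unfolding H_def by (intro sum_mono2) auto
    finally show ?thesis .
  qed
  have "(\<Sum>k\<in>{0..M}. f k) = (\<Sum>k\<in>{..<k0}. f k) + (\<Sum>k\<in>{k0..M}. f k)"
    unfolding split by (rule sum.union_disjoint) auto
  with s1 s2 show ?thesis unfolding f_def by linarith
qed



definition G :: "nat \<Rightarrow> nat \<Rightarrow> nat \<Rightarrow> real" where
  "G m n n' = (if n = n' then 0 else 1 / \<bar>real (n div m) - real (n' div m)\<bar>)"

lemma G_sym: "G m n n' = G m n' n" unfolding G_def using abs_minus_commute[of "real (n div m)" "real (n' div m)"] by auto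

lemma G_nonneg: "0 \<le> G m n n'" unfolding G_def by simp

lemma G_sum:
  assumes A: "A \<subseteq> {1..M}" and res: "\<forall>n\<in>A. \<forall>n'\<in>A. n mod m = n' mod m"
    and n: "n \<in> A" and m: "m \<ge> 1"
  shows "(\<Sum>n'\<in>A. G m n n') \<le> 2 * H M"
proof -
  have fin: "finite A" using A by (rule finite_subset) simp
  have inj: "inj_on (\<lambda>x. x div m) A"
  proof (rule inj_onI)
    fix x y assume xy: "x \<in> A" "y \<in> A" "x div m = y div m"
    have "x mod m = y mod m" using res xy(1,2) by blast
    note xy this
    then show "x = y" using div_mult_mod_eq[of x m] div_mult_mod_eq[of y m] by metis
  qed
  define f where "f k = (if k = n div m then 0 else 1 / \<bar>real (n div m) - real k\<bar>)" for k
  have "(\<Sum>n'\<in>A. G m n n') = (\<Sum>n'\<in>A. f (n' div m))"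
  proof (rule sum.cong)
    fix n' assume "n' \<in> A"
    hence "(n = n') = (n div m = n' div m)" using inj n by (metis inj_onD)
    thus "G m n n' = f (n' div m)" unfolding G_def f_def by auto
  qed simp
  also have "\<dots> = (\<Sum>k\<in>(\<lambda>x. x div m) ` A. f k)" using sum.reindex[OF inj, of f] by (simp add: comp_def)
  also have "\<dots> \<le> (\<Sum>k\<in>{0..M}. f k)"
  proof (rule sum_mono2)
    show "(\<lambda>x. x div m) ` A \<subseteq> {0..M}" proof
      fix k assume "k \<in> (\<lambda>x. x div m) ` A"
      then obtain x where "x \<in> A" "k = x div m" by blast
      moreover have "x \<le> M" using A \<open>x \<in> A\<close> by auto
      moreover have "x div m \<le> M" using \<open>x \<le> M\<close> by (rule le_trans[OF div_le_dividend])
      ultimately show "k \<in> {0..M}" by simp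
    qed
  qed (auto simp: f_def)
  also have "\<dots> \<le> 2 * H M" unfolding f_def
  proof (rule half_sum)
    have "n \<le> M" using A n by auto
    thus "n div m \<le> M" by (rule le_trans[OF div_le_dividend])
  qed
  finally show ?thesis .
qed



lemma log_gap:
  assumes "1 \<le> n" "n \<le> M" "1 \<le> n'" "n' \<le> M" 
  shows "\<bar>real n' - real n\<bar> / real M \<le> \<bar>ln (real n') - ln (real n)\<bar>"
proof -
  have key: "(real b - real a) / real M \<le> ln (real b) - ln (real a)"
    if "1 \<le> a" "a \<le> b" "b \<le> M" for a b :: nat
  proof -
    have "ln (real a / real b) \<le> real a / real b - 1" using that by (intro ln_le_minus_one) auto
    hence "1 - real a / real b \<le> ln (real b) - ln (real a)" using that by (simp add: ln_div)
    moreover have "(real b - real a) / real M \<le> (real b - real a) / real b"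
      using that by (intro divide_left_mono) auto
    moreover have "(real b - real a) / real b = 1 - real a / real b" using that by (simp add: field_simps)
    ultimately show ?thesis by linarith
  qed
  show ?thesis
  proof (cases "n \<le> n'")
    case True
    have "(real n' - real n) / real M \<le> ln (real n') - ln (real n)" using key[of n n'] True assms by blast
    moreover have "\<bar>real n' - real n\<bar> = real n' - real n" using True by simp
    moreover have "ln (real n') - ln (real n) \<le> \<bar>ln (real n') - ln (real n)\<bar>" by linarith
    ultimately show ?thesis by simp
  next
    case False
    have "(real n - real n') / real M \<le> ln (real n) - ln (real n')" using key[of n' n] False assms by simp
    moreover have "\<bar>real n' - real n\<bar> = real n - real n'" using False by simp
    moreover have "ln (real n) - ln (real n') \<le> \<bar>ln (real n') - ln (real n)\<bar>" by linarith
    ultimately show ?thesis by simp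
  qed
qed



lemma mv:
  fixes A :: "nat set" and c :: "nat \<Rightarrow> complex" and T :: real and M m :: nat
  assumes A: "A \<subseteq> {1..M}" and res: "\<forall>n\<in>A. \<forall>n'\<in>A. n mod m = n' mod m"
    and m: "m \<ge> 1" and T: "T > 0"
  shows "integral {-T..T} (\<lambda>t. cmod (\<Sum>n\<in>A. c n * cis (-(t * ln (real n))))^2)
     \<le> (2*T + 4 * (real M / real m) * H M) * (\<Sum>n\<in>A. cmod (c n)^2)"
proof -
  have fin: "finite A" using A by (rule finite_subset) simp
  define \<beta> where "\<beta> n n' = c n * cnj (c n')" for n n'
  define L where "L n n' = ln (real n') - ln (real n)" for n n'
  define a where "a n = cmod (c n)" for n
  have pt: "cmod (\<Sum>n\<in>A. c n * cis (-(t * ln (real n))))^2 =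
     (\<Sum>n\<in>A. \<Sum>n'\<in>A. Re (\<beta> n n') * cos (L n n' * t) - Im (\<beta> n n') * sin (L n n' * t))" for t
  proof -
    define z where "z = (\<Sum>n\<in>A. c n * cis (-(t * ln (real n))))"
    have "z * cnj z = (\<Sum>n\<in>A. \<Sum>n'\<in>A. \<beta> n n' * cis (L n n' * t))"
      unfolding z_def cnj_sum sum_product
    proof (intro sum.cong refl)
      fix n n'
      have e: "cis (-(t*ln (real n))) * cis (-(-(t*ln (real n')))) = cis (L n n' * t)"
        unfolding cis_mult L_def by (simp add: algebra_simps)
      show "c n * cis (-(t * ln (real n))) * cnj (c n' * cis (-(t * ln (real n')))) = \<beta> n n' * cis (L n n' * t)"
        unfolding \<beta>_def e[symmetric] complex_cnj_mult cis_cnj by (simp only: mult_ac)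
    qed
    hence "Re (z * cnj z) = (\<Sum>n\<in>A. \<Sum>n'\<in>A. Re (\<beta> n n' * cis (L n n' * t)))"
      by (simp add: Re_sum del: times_complex.sel)
    moreover have "Re (z * cnj z) = cmod z ^2"
      using arg_cong[OF complex_norm_square[of z], of Re] by simp
    ultimately show ?thesis unfolding z_def[symmetric] by simp
  qed
  define J where "J n n' = Re (\<beta> n n') * K T (L n n')" for n n'
  have hi: "((\<lambda>t. \<Sum>n\<in>A. \<Sum>n'\<in>A. Re (\<beta> n n') * cos (L n n' * t) - Im (\<beta> n n') * sin (L n n' * t))
      has_integral (\<Sum>n\<in>A. \<Sum>n'\<in>A. J n n')) {-T..T}"
  proof (intro has_integral_sum fin)
    fix n n'
    have "((\<lambda>t. Re (\<beta> n n') * cos (L n n' * t) - Im (\<beta> n n') * sin (L n n' * t))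
      has_integral (Re (\<beta> n n') * K T (L n n') - Im (\<beta> n n') * 0)) {-T..T}"
      by (intro has_integral_diff has_integral_mult_right int_cos int_sin T)
    thus "((\<lambda>t. Re (\<beta> n n') * cos (L n n' * t) - Im (\<beta> n n') * sin (L n n' * t))
      has_integral J n n') {-T..T}" unfolding J_def by simp
  qed
  have int_eq: "integral {-T..T} (\<lambda>t. cmod (\<Sum>n\<in>A. c n * cis (-(t * ln (real n))))^2)
      = (\<Sum>n\<in>A. \<Sum>n'\<in>A. J n n')"
    unfolding pt using hi by (rule integral_unique)
  define B where "B n n' = (if n = n' then 2*T*a n^2 else 0) + (real M / real m) * (a n^2 + a n'^2) * G m n n'" for n n'
  have JB: "J n n' \<le> B n n'" if n: "n \<in> A" and n': "n' \<in> A" for n n'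
  proof (cases "n = n'")
    case True
    have "Re (\<beta> n n) = a n ^2" unfolding \<beta>_def a_def
      using arg_cong[OF complex_norm_square[of "c n"], of Re] by simp
    thus ?thesis using True unfolding J_def B_def L_def K_def G_def by simp
  next
    case False
    have n1: "1 \<le> n" "n \<le> M" and n1': "1 \<le> n'" "n' \<le> M" using A n n' by auto
    have r: "n mod m = n' mod m" using res n n' by blast
    define D where "D = \<bar>real (n div m) - real (n' div m)\<bar>"
    have nm: "real n = real m * real (n div m) + real (n mod m)"
      by (metis div_mult_mod_eq of_nat_add of_nat_mult mult.commute)
    have nm': "real n' = real m * real (n' div m) + real (n mod m)"
      using r by (metis div_mult_mod_eq of_nat_add of_nat_mult mult.commute)
    have diff: "\<bar>real n' - real n\<bar> = real m * D" unfolding D_def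
      by (simp add: nm nm' abs_mult right_diff_distrib[symmetric] abs_minus_commute)
    have Dpos: "D > 0"
    proof -
      have "real n' \<noteq> real n" using False by simp
      hence "real m * D \<noteq> 0" using diff by linarith
      thus ?thesis unfolding D_def by simp
    qed
    have Lne: "L n n' \<noteq> 0" unfolding L_def using False n1 n1' by simp
    have gap: "\<bar>real n' - real n\<bar> / real M \<le> \<bar>L n n'\<bar>" unfolding L_def by (rule log_gap[OF n1 n1'])
    have Mpos: "real M > 0" using n1 by simp
    have mpos: "real m > 0" using m by simp
    have invL: "1 / \<bar>L n n'\<bar> \<le> real M / (real m * D)"
    proof -
      have "real m * D / real M \<le> \<bar>L n n'\<bar>" using gap diff by simp
      moreover have "0 < real m * D / real M" using Dpos Mpos mpos by simp
      ultimately have "1 / \<bar>L n n'\<bar> \<le> 1 / (real m * D / real M)"  by (intro frac_le) auto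
      thus ?thesis by simp
    qed
    have "J n n' \<le> \<bar>Re (\<beta> n n')\<bar> * \<bar>K T (L n n')\<bar>" unfolding J_def by (simp add: abs_mult[symmetric])
    also have "\<dots> \<le> (a n * a n') * (2 / \<bar>L n n'\<bar>)"
    proof (rule mult_mono)
      show "\<bar>Re (\<beta> n n')\<bar> \<le> a n * a n'" unfolding \<beta>_def a_def
        using abs_Re_le_cmod[of "c n * cnj (c n')"] by (simp add: norm_mult)
      show "\<bar>K T (L n n')\<bar> \<le> 2 / \<bar>L n n'\<bar>" by (rule K_bound[OF Lne])
    qed (auto simp: a_def)
    also have "\<dots> \<le> (a n * a n') * (2 * (real M / (real m * D)))"
      using invL by (intro mult_left_mono) (auto simp: a_def)
    also have "\<dots> = (real M / real m) * (2 * a n * a n') * (1 / D)" by (simp add: field_simps)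
    also have "\<dots> \<le> (real M / real m) * (a n^2 + a n'^2) * (1 / D)"
    proof -
      have "2 * a n * a n' \<le> a n^2 + a n'^2" by (rule sum_squares_bound)
      thus ?thesis using Dpos Mpos mpos by (intro mult_right_mono mult_left_mono) auto
    qed
    also have "\<dots> = B n n'" unfolding B_def G_def D_def using False by simp
    finally show ?thesis .
  qed
  have s1: "(\<Sum>n\<in>A. \<Sum>n'\<in>A. J n n') \<le> (\<Sum>n\<in>A. \<Sum>n'\<in>A. B n n')"
    using JB by (intro sum_mono) auto
  have s2: "(\<Sum>n\<in>A. \<Sum>n'\<in>A. B n n') = (\<Sum>n\<in>A. 2*T*a n^2) + (real M / real m) *
      ((\<Sum>n\<in>A. \<Sum>n'\<in>A. a n^2 * G m n n') + (\<Sum>n\<in>A. \<Sum>n'\<in>A. a n'^2 * G m n n'))"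
    unfolding B_def using fin
    by (simp add: sum.distrib sum_distrib_left distrib_left distrib_right mult.assoc)
  have s3: "(\<Sum>n\<in>A. \<Sum>n'\<in>A. a n'^2 * G m n n') = (\<Sum>n\<in>A. \<Sum>n'\<in>A. a n^2 * G m n n')"
    by (subst sum.swap) (simp add: G_sym)
  have s4: "(\<Sum>n\<in>A. \<Sum>n'\<in>A. a n^2 * G m n n') \<le> (\<Sum>n\<in>A. a n^2 * (2 * H M))"
  proof (rule sum_mono)
    fix n assume n: "n \<in> A"
    have "(\<Sum>n'\<in>A. a n^2 * G m n n') = a n^2 * (\<Sum>n'\<in>A. G m n n')" by (simp add: sum_distrib_left)
    also have "\<dots> \<le> a n^2 * (2 * H M)" by (intro mult_left_mono G_sum[OF A res n m]) auto
    finally show "(\<Sum>n'\<in>A. a n^2 * G m n n') \<le> a n^2 * (2 * H M)" .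
  qed
  have s5: "(real M / real m) * ((\<Sum>n\<in>A. \<Sum>n'\<in>A. a n^2 * G m n n') + (\<Sum>n\<in>A. \<Sum>n'\<in>A. a n^2 * G m n n'))
     \<le> (real M / real m) * ((\<Sum>n\<in>A. a n^2 * (2 * H M)) + (\<Sum>n\<in>A. a n^2 * (2 * H M)))"
    using s4 by (intro mult_left_mono add_mono) auto
  have s6: "(\<Sum>n\<in>A. 2*T*a n^2) + (real M / real m) * ((\<Sum>n\<in>A. a n^2 * (2 * H M)) + (\<Sum>n\<in>A. a n^2 * (2 * H M)))
      = (2*T + 4 * (real M / real m) * H M) * (\<Sum>n\<in>A. a n^2)"
    by (simp add: sum_distrib_left sum_distrib_right sum_divide_distrib algebra_simps)
  have "(\<Sum>n\<in>A. \<Sum>n'\<in>A. J n n') \<le> (2*T + 4 * (real M / real m) * H M) * (\<Sum>n\<in>A. a n^2)"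
  proof -
    have "(\<Sum>n\<in>A. \<Sum>n'\<in>A. J n n') \<le> (\<Sum>n\<in>A. 2*T*a n^2) + (real M / real m) *
      ((\<Sum>n\<in>A. \<Sum>n'\<in>A. a n^2 * G m n n') + (\<Sum>n\<in>A. \<Sum>n'\<in>A. a n^2 * G m n n'))"
      using s1 unfolding s2 s3 .
    also have "\<dots> \<le> (\<Sum>n\<in>A. 2*T*a n^2) + (real M / real m) * ((\<Sum>n\<in>A. a n^2 * (2 * H M)) + (\<Sum>n\<in>A. a n^2 * (2 * H M)))"
      using s5 by (rule add_left_mono)
    finally show ?thesis unfolding s6 .
  qed
  then show ?thesis unfolding int_eq a_def .
qed



lemma cs_integral:
  fixes g :: "real \<Rightarrow> real" and a b :: real
  assumes cont: "continuous_on {a..b} g" and ab: "a < b"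
  shows "(integral {a..b} g)^2 \<le> (b - a) * integral {a..b} (\<lambda>t. (g t)^2)"
proof -
  define I where "I = integral {a..b} g"
  define Q where "Q = integral {a..b} (\<lambda>t. (g t)^2)"
  define c where "c = I / (b - a)"
  have hg: "(g has_integral I) {a..b}" unfolding I_def
    by (rule integrable_integral[OF integrable_continuous_interval[OF cont]])
  have cont2: "continuous_on {a..b} (\<lambda>t. (g t)^2)" by (intro continuous_intros cont)
  have hq: "((\<lambda>t. (g t)^2) has_integral Q) {a..b}" unfolding Q_def
    by (rule integrable_integral[OF integrable_continuous_interval[OF cont2]])
  have hc: "((\<lambda>t. c^2) has_integral (b - a) * c^2) {a..b}"
    using has_integral_const_real[of "c^2" a b] ab by simp
  have h: "((\<lambda>t. (g t)^2 - 2*c * g t + c^2) has_integral (Q - 2*c*I + (b-a)*c^2)) {a..b}"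
    by (intro has_integral_add has_integral_diff has_integral_mult_right hq hg hc)
  have "0 \<le> Q - 2*c*I + (b-a)*c^2"
  proof (rule has_integral_nonneg[OF h])
    fix t show "0 \<le> (g t)^2 - 2*c * g t + c^2"
      using zero_le_power2[of "g t - c"] by (simp add: power2_diff algebra_simps)
  qed
  also have "Q - 2*c*I + (b-a)*c^2 = Q - I^2 / (b - a)"
  proof -
    have "(b-a)*c^2 = c*I" unfolding c_def using ab by (simp add: power2_eq_square)
    moreover have "c*I = I^2/(b-a)" unfolding c_def by (simp add: power2_eq_square)
    ultimately show ?thesis by linarith
  qed
  finally have "I^2 / (b - a) \<le> Q" by simp
  thus ?thesis unfolding I_def[symmetric] Q_def[symmetric] using ab by (simp add: field_simps)
qed

lemma term_rw:
  fixes n :: nat and \<sigma> t :: real and z :: complex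
  assumes n: "n \<ge> 1"
  shows "z / (of_nat n) powr (complex_of_real \<sigma> + \<i> * complex_of_real t)
       = z / of_real (real n powr \<sigma>) * cis (-(t * ln (real n)))"
proof -
  have np: "(of_nat n :: complex) \<noteq> 0" using n by simp
  have "(of_nat n :: complex) powr (complex_of_real \<sigma> + \<i> * complex_of_real t)
      = exp ((complex_of_real \<sigma> + \<i> * complex_of_real t) * of_real (ln (real n)))"
    using n np by (simp add: powr_def)
  also have "\<dots> = exp (of_real (\<sigma> * ln (real n))) * exp (\<i> * of_real (t * ln (real n)))"
    by (simp add: algebra_simps exp_add[symmetric])
  also have "\<dots> = of_real (exp (\<sigma> * ln (real n))) * cis (t * ln (real n))"
    by (simp only: exp_of_real cis_conv_exp)
  also have "exp (\<sigma> * ln (real n)) = real n powr \<sigma>"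
    using n by (simp add: powr_def)
  finally have e: "(of_nat n :: complex) powr (complex_of_real \<sigma> + \<i> * complex_of_real t)
      = of_real (real n powr \<sigma>) * cis (t * ln (real n))" .
  have "inverse (cis (t * ln (real n))) = cis (-(t * ln (real n)))" by (simp add: cis_inverse)
  thus ?thesis unfolding e by (simp add: divide_inverse)
qed



lemma group_mod:
  fixes S :: "nat set" and h :: "nat \<Rightarrow> 'b::comm_monoid_add"
  assumes "finite S" "m \<ge> 1"
  shows "(\<Sum>n\<in>S. h n) = (\<Sum>r<m. \<Sum>n\<in>{n\<in>S. n mod m = r}. h n)"
proof -
  have "(\<lambda>n. n mod m) ` S \<subseteq> {..<m}" using assms by auto
  from sum.group[OF assms(1) finite_lessThan this, of h] show ?thesis by simp
qed

lemma per_mod: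
  fixes m M :: nat and T \<sigma> :: real and a :: "nat \<Rightarrow> complex"
  assumes m: "m \<ge> 1" and M: "M \<ge> 1" and T: "T > 0"
  shows "(\<Sum>chi\<in>{chi. dirichlet_char m chi \<and> chi \<noteq> principal_char m}.
       (integral {-T..T} (\<lambda>t. norm (\<Sum>n\<in>{1..M}.
          a n * chi n / (of_nat n) powr (complex_of_real \<sigma> + \<i> * complex_of_real t)))) ^ 2)
    \<le> 2*T*(2*T*real m + 4 * real M * H M) * (\<Sum>n\<in>{1..M}. (norm (a n))^2 / (real n) powr (2 * \<sigma>))"
proof -
  define X where "X = {chi. dirichlet_char m chi \<and> chi \<noteq> principal_char m}"
  define S where "S = (\<Sum>n\<in>{1..M}. (norm (a n))^2 / (real n) powr (2 * \<sigma>))"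
  have S0: "S \<ge> 0" unfolding S_def by (intro sum_nonneg) auto
  have R0: "0 \<le> 2*T*(2*T*real m + 4 * real M * H M) * S"
    using T S0 H_nonneg[of M] by (intro mult_nonneg_nonneg add_nonneg_nonneg) auto
  show ?thesis
  proof (cases "finite X")
    case False
    then show ?thesis using R0 unfolding X_def[symmetric] S_def[symmetric] by simp
  next
    case finX: True
    define c where "c n = a n / of_real (real n powr \<sigma>)" for n
    define E where "E t n = cis (-(t * ln (real n)))" for t n
    define g where "g chi t = cmod (\<Sum>n\<in>{1..M}. c n * E t n * chi n)" for chi t
    define A where "A r = {n\<in>{1..M}. n mod m = r}" for r
    define V where "V r t = (\<Sum>n\<in>A r. c n * cis (-(t * ln (real n))))" for r t
    have geq: "(\<lambda>t. norm (\<Sum>n\<in>{1..M}. a n * chi n / (of_nat n) powr (complex_of_real \<sigma> + \<i> * complex_of_real t)))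
        = g chi" for chi
    proof
      fix t
      show "norm (\<Sum>n\<in>{1..M}. a n * chi n / (of_nat n) powr (complex_of_real \<sigma> + \<i> * complex_of_real t)) = g chi t"
        unfolding g_def
      proof (intro arg_cong[where f=norm] sum.cong refl)
        fix n assume "n \<in> {1..M}"
        hence "n \<ge> 1" by simp
        thus "a n * chi n / (of_nat n) powr (complex_of_real \<sigma> + \<i> * complex_of_real t) = c n * E t n * chi n"
          unfolding term_rw[OF \<open>n \<ge> 1\<close>] c_def E_def by (simp add: mult_ac)
      qed
    qed
    have contg: "continuous_on {-T..T} (g chi)" for chi
      unfolding g_def E_def by (intro continuous_intros)
    have contV: "continuous_on {-T..T} (\<lambda>t. cmod (V r t)^2)" for r
      unfolding V_def by (intro continuous_intros)
    have intg2: "(\<lambda>t. (g chi t)^2) integrable_on {-T..T}" for chi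
      by (intro integrable_continuous_interval continuous_intros contg)
    have intV: "(\<lambda>t. cmod (V r t)^2) integrable_on {-T..T}" for r
      by (intro integrable_continuous_interval contV)
    have st1: "(\<Sum>chi\<in>X. (integral {-T..T} (g chi))^2) \<le> (\<Sum>chi\<in>X. 2*T * integral {-T..T} (\<lambda>t. (g chi t)^2))"
    proof (rule sum_mono)
      fix chi
      show "(integral {-T..T} (g chi))^2 \<le> 2*T * integral {-T..T} (\<lambda>t. (g chi t)^2)"
        using cs_integral[OF contg, of chi] T by simp
    qed
    have pw: "(\<Sum>chi\<in>X. (g chi t)^2) \<le> real m * (\<Sum>r<m. cmod (V r t)^2)" for t
    proof -
      have eqchi: "(\<Sum>n\<in>{1..M}. c n * E t n * chi n) = (\<Sum>r<m. chi r * V r t)" if chi: "chi \<in> X" for chi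
      proof -
        have dc: "dirichlet_char m chi" using chi unfolding X_def by auto
        have "(\<Sum>n\<in>{1..M}. c n * E t n * chi n) = (\<Sum>r<m. \<Sum>n\<in>A r. c n * E t n * chi n)"
          unfolding A_def by (rule group_mod) (use m in auto)
        also have "\<dots> = (\<Sum>r<m. chi r * V r t)"
        proof (rule sum.cong[OF refl])
          fix r assume "r \<in> {..<m}"
          have "(\<Sum>n\<in>A r. c n * E t n * chi n) = (\<Sum>n\<in>A r. chi r * (c n * cis (-(t * ln (real n)))))"
          proof (rule sum.cong[OF refl])
            fix n assume "n \<in> A r"
            hence "n mod m = r" unfolding A_def by simp
            hence "chi n = chi r" using dc_mod[OF dc, of n] by simp
            thus "c n * E t n * chi n = chi r * (c n * cis (-(t * ln (real n))))" unfolding E_def by simp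
          qed
          thus "(\<Sum>n\<in>A r. c n * E t n * chi n) = chi r * V r t" unfolding V_def by (simp add: sum_distrib_left)
        qed
        finally show ?thesis .
      qed
      have "(\<Sum>chi\<in>X. (g chi t)^2) = (\<Sum>chi\<in>X. cmod (\<Sum>r<m. chi r * V r t)^2)"
        unfolding g_def using eqchi by (intro sum.cong refl) auto
      also have "\<dots> \<le> real m * (\<Sum>r<m. cmod (V r t)^2)"
        by (rule bessel[OF finX _ m]) (auto simp: X_def)
      finally show ?thesis .
    qed
    have st2: "(\<Sum>chi\<in>X. integral {-T..T} (\<lambda>t. (g chi t)^2)) \<le> real m * (\<Sum>r<m. integral {-T..T} (\<lambda>t. cmod (V r t)^2))"
    proof -
      have "(\<Sum>chi\<in>X. integral {-T..T} (\<lambda>t. (g chi t)^2)) = integral {-T..T} (\<lambda>t. \<Sum>chi\<in>X. (g chi t)^2)"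
        by (rule Henstock_Kurzweil_Integration.integral_sum[symmetric]) (use finX intg2 in auto)
      also have "\<dots> \<le> integral {-T..T} (\<lambda>t. real m * (\<Sum>r<m. cmod (V r t)^2))"
      proof (rule integral_le)
        show "(\<lambda>t. \<Sum>chi\<in>X. (g chi t)^2) integrable_on {-T..T}"
          by (rule integrable_sum) (use finX intg2 in auto)
        show "(\<lambda>t. real m * (\<Sum>r<m. cmod (V r t)^2)) integrable_on {-T..T}"
          by (intro integrable_continuous_interval continuous_intros contV)
      qed (rule pw)
      also have "\<dots> = real m * (\<Sum>r<m. integral {-T..T} (\<lambda>t. cmod (V r t)^2))"
        by (simp only: Henstock_Kurzweil_Integration.integral_mult_right
            Henstock_Kurzweil_Integration.integral_sum[OF finite_lessThan intV])
      finally show ?thesis .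
    qed
    have st3: "(\<Sum>r<m. integral {-T..T} (\<lambda>t. cmod (V r t)^2))
        \<le> (\<Sum>r<m. (2*T + 4 * (real M / real m) * H M) * (\<Sum>n\<in>A r. cmod (c n)^2))"
    proof (rule sum_mono)
      fix r
      show "integral {-T..T} (\<lambda>t. cmod (V r t)^2) \<le> (2*T + 4 * (real M / real m) * H M) * (\<Sum>n\<in>A r. cmod (c n)^2)"
        unfolding V_def by (rule mv) (use m T in \<open>auto simp: A_def\<close>)
    qed
    have cS: "(\<Sum>r<m. \<Sum>n\<in>A r. cmod (c n)^2) = S"
    proof -
      have "(\<Sum>r<m. \<Sum>n\<in>A r. cmod (c n)^2) = (\<Sum>n\<in>{1..M}. cmod (c n)^2)"
        unfolding A_def by (rule group_mod[symmetric]) (use m in auto)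
      also have "\<dots> = S" unfolding S_def
      proof (rule sum.cong[OF refl])
        fix n assume "n \<in> {1..M}"
        hence np: "real n > 0" by simp
        have "(real n powr \<sigma>)^2 = real n powr (2*\<sigma>)"
          by (simp add: power2_eq_square powr_add[symmetric])
        thus "cmod (c n)^2 = (norm (a n))^2 / (real n) powr (2 * \<sigma>)"
          unfolding c_def using np by (simp add: norm_divide power_divide)
      qed
      finally show ?thesis .
    qed
    have "(\<Sum>chi\<in>X. (integral {-T..T} (g chi))^2) \<le> 2*T * (real m * ((2*T + 4 * (real M / real m) * H M) * S))"
    proof -
      have "(\<Sum>chi\<in>X. (integral {-T..T} (g chi))^2) \<le> 2*T * (\<Sum>chi\<in>X. integral {-T..T} (\<lambda>t. (g chi t)^2))"
        using st1 by (simp add: sum_distrib_left)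
      also have "\<dots> \<le> 2*T * (real m * (\<Sum>r<m. integral {-T..T} (\<lambda>t. cmod (V r t)^2)))"
        using st2 T by (intro mult_left_mono) auto
      also have "\<dots> \<le> 2*T * (real m * (\<Sum>r<m. (2*T + 4 * (real M / real m) * H M) * (\<Sum>n\<in>A r. cmod (c n)^2)))"
        using st3 T by (intro mult_left_mono) auto
      also have "\<dots> = 2*T * (real m * ((2*T + 4 * (real M / real m) * H M) * S))"
        unfolding cS[symmetric] by (simp add: sum_distrib_left)
      finally show ?thesis .
    qed
    also have "\<dots> = 2*T*(2*T*real m + 4 * real M * H M) * S" using m by (simp add: field_simps)
    finally show ?thesis unfolding X_def[symmetric] S_def[symmetric] geq .
  qed
qed



lemma log_eps: fixes N \<epsilon> :: real assumes "N \<ge> 1" "\<epsilon> > 0"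
  shows "1 + ln N \<le> (1 + 1/\<epsilon>) * N powr \<epsilon>"
proof -
  have Np: "N powr \<epsilon> > 0" using assms by simp
  have "ln (N powr \<epsilon>) \<le> N powr \<epsilon> - 1" by (rule ln_le_minus_one[OF Np])
  hence "\<epsilon> * ln N \<le> N powr \<epsilon> - 1" using assms by (simp add: ln_powr)
  hence "ln N \<le> (N powr \<epsilon> - 1) / \<epsilon>" using assms by (simp add: field_simps)
  moreover have "1 \<le> N powr \<epsilon>" using assms by (simp add: ge_one_powr_ge_zero)
  ultimately have "ln N \<le> N powr \<epsilon> / \<epsilon>" using assms by (smt (verit) divide_right_mono)
  moreover have "1 \<le> N powr \<epsilon>" using assms by (simp add: ge_one_powr_ge_zero)
  ultimately show ?thesis by (simp add: algebra_simps)
qed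

theorem mainTheorem11:
  assumes "\<epsilon> > (0::real)"
  shows "\<exists>C::real. \<forall>(R::real) (T::real) (N::real) (\<sigma>::real) (j::nat) (a::nat \<Rightarrow> complex).
    T \<ge> 3 \<and> R \<ge> 1 \<and> N \<ge> 1 \<and> \<sigma> \<ge> 1/2 \<and> j \<ge> 1 \<longrightarrow>
    (\<Sum>q\<in>{1..nat \<lfloor>R\<rfloor>}. \<Sum>chi\<in>{chi. dirichlet_char (q * j) chi \<and> chi \<noteq> principal_char (q * j)}.
       (integral {-T..T} (\<lambda>t. norm (\<Sum>n\<in>{1..nat \<lfloor>N\<rfloor>}.
          a n * chi n / (of_nat n) powr (complex_of_real \<sigma> + \<i> * complex_of_real t)))) ^ 2)
    \<le> C * (real j * R * N * T) powr \<epsilon> * (R * N * T + real j * R^2 * T^2) *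
       (\<Sum>n\<in>{1..nat \<lfloor>N\<rfloor>}. (norm (a n))^2 / (real n) powr (2 * \<sigma>))"
proof (intro exI allI impI)
  fix R T N \<sigma> :: real and j :: nat and a :: "nat \<Rightarrow> complex"
  assume h: "T \<ge> 3 \<and> R \<ge> 1 \<and> N \<ge> 1 \<and> \<sigma> \<ge> 1/2 \<and> j \<ge> 1"
  hence T: "T \<ge> 3" and R: "R \<ge> 1" and N: "N \<ge> 1" and j: "j \<ge> 1" by auto
  define Q where "Q = nat \<lfloor>R\<rfloor>"
  define M where "M = nat \<lfloor>N\<rfloor>"
  define S where "S = (\<Sum>n\<in>{1..M}. (norm (a n))^2 / (real n) powr (2 * \<sigma>))"
  define P where "P = (1 + 1/\<epsilon>) * (real j * R * N * T) powr \<epsilon>"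
  have S0: "S \<ge> 0" unfolding S_def by (intro sum_nonneg) auto
  have QR: "real Q \<le> R" and Q1: "Q \<ge> 1" unfolding Q_def using R by linarith+
  have MN: "real M \<le> N" and M1: "M \<ge> 1" unfolding M_def using N by linarith+
  have jr: "real j \<ge> 1" using j by simp
  have base: "N \<le> real j * R * N * T"
  proof -
    have "1 \<le> real j * R * T" using jr R T
      by (metis dual_order.trans less_eq_real_def mult_le_cancel_left1 mult_le_cancel_right1 one_le_numeral order.refl zero_less_one)
    hence "1 * N \<le> (real j * R * T) * N" using N by (intro mult_right_mono) auto
    thus ?thesis by (simp add: mult_ac)
  qed
  have HP: "H M \<le> P"
  proof -
    have "H M \<le> 1 + ln (real M)" by (rule H_le[OF M1])
    also have "\<dots> \<le> 1 + ln N" using MN M1 by simp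
    also have "\<dots> \<le> (1 + 1/\<epsilon>) * N powr \<epsilon>" by (rule log_eps[OF N assms])
    also have "\<dots> \<le> P" unfolding P_def using assms N base
      by (intro mult_left_mono powr_mono2) auto
    finally show ?thesis .
  qed
  have P1: "1 \<le> P"
  proof -
    have b1: "1 \<le> real j * R * N * T" using base N by linarith
    have "1 \<le> (real j * R * N * T) powr \<epsilon>" using ge_one_powr_ge_zero[OF b1, of \<epsilon>] assms by simp
    moreover have "1 \<le> 1 + 1/\<epsilon>" using assms by simp
    ultimately show ?thesis unfolding P_def using one_le_mult_iff by (metis mult_mono' order.trans zero_le_one mult_1)
  qed
  have step: "(\<Sum>q\<in>{1..Q}. \<Sum>chi\<in>{chi. dirichlet_char (q * j) chi \<and> chi \<noteq> principal_char (q * j)}.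
       (integral {-T..T} (\<lambda>t. norm (\<Sum>n\<in>{1..M}.
          a n * chi n / (of_nat n) powr (complex_of_real \<sigma> + \<i> * complex_of_real t)))) ^ 2)
     \<le> (\<Sum>q\<in>{1..Q}. 2*T*(2*T*(real Q * real j) + 4 * real M * H M) * S)"
  proof (rule sum_mono)
    fix q assume q: "q \<in> {1..Q}"
    have "(\<Sum>chi\<in>{chi. dirichlet_char (q * j) chi \<and> chi \<noteq> principal_char (q * j)}.
       (integral {-T..T} (\<lambda>t. norm (\<Sum>n\<in>{1..M}.
          a n * chi n / (of_nat n) powr (complex_of_real \<sigma> + \<i> * complex_of_real t)))) ^ 2)
        \<le> 2*T*(2*T*real (q*j) + 4 * real M * H M) * S"
      unfolding S_def by (rule per_mod) (use q j M1 T in auto)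
    also have "\<dots> \<le> 2*T*(2*T*(real Q * real j) + 4 * real M * H M) * S"
    proof -
      have "real q \<le> real Q" using q by simp
      hence "real (q*j) \<le> real Q * real j" by (simp add: mult_right_mono)
      thus ?thesis using T S0 by (intro mult_right_mono mult_left_mono add_right_mono) auto
    qed
    finally show "(\<Sum>chi\<in>{chi. dirichlet_char (q * j) chi \<and> chi \<noteq> principal_char (q * j)}.
       (integral {-T..T} (\<lambda>t. norm (\<Sum>n\<in>{1..M}.
          a n * chi n / (of_nat n) powr (complex_of_real \<sigma> + \<i> * complex_of_real t)))) ^ 2)
        \<le> 2*T*(2*T*(real Q * real j) + 4 * real M * H M) * S" .
  qed
  also have "\<dots> = real Q * (2*T*(2*T*(real Q * real j) + 4 * real M * H M) * S)" by simp
  also have "\<dots> = (4 * (real j * (real Q)^2 * T^2) + 8 * H M * (real Q * real M * T)) * S"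
    by (simp add: algebra_simps power2_eq_square)
  also have "\<dots> \<le> (8 * P * (real j * R^2 * T^2) + 8 * P * (R * N * T)) * S"
  proof (rule mult_right_mono[OF _ S0], rule add_mono)
    have "real Q ^2 \<le> R^2" using QR Q1 by (intro power_mono) auto
    hence hX: "real j * (real Q)^2 * T^2 \<le> real j * R^2 * T^2" using j by (intro mult_right_mono mult_left_mono) auto
    have h4: "4 \<le> 8 * P" using P1 by simp
    show "4 * (real j * (real Q)^2 * T^2) \<le> 8 * P * (real j * R^2 * T^2)"
      by (rule mult_mono[OF h4 hX]) (use P1 in simp_all)
    have "real Q * real M \<le> R * N" using QR MN Q1 M1 R by (intro mult_mono) auto
    hence hY: "real Q * real M * T \<le> R * N * T" using T by (intro mult_right_mono) auto
    have h8: "8 * H M \<le> 8 * P" using HP by simp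
    show "8 * H M * (real Q * real M * T) \<le> 8 * P * (R * N * T)"
      by (rule mult_mono[OF h8 hY]) (use P1 T in simp_all)
  qed
  also have "\<dots> = (8 * (1 + 1/\<epsilon>)) * (real j * R * N * T) powr \<epsilon> * (R * N * T + real j * R^2 * T^2) * S"
    unfolding P_def by (simp add: algebra_simps)
  finally show "(\<Sum>q\<in>{1..nat \<lfloor>R\<rfloor>}. \<Sum>chi\<in>{chi. dirichlet_char (q * j) chi \<and> chi \<noteq> principal_char (q * j)}.
       (integral {-T..T} (\<lambda>t. norm (\<Sum>n\<in>{1..nat \<lfloor>N\<rfloor>}.
          a n * chi n / (of_nat n) powr (complex_of_real \<sigma> + \<i> * complex_of_real t)))) ^ 2)
    \<le> (8 * (1 + 1/\<epsilon>)) * (real j * R * N * T) powr \<epsilon> * (R * N * T + real j * R^2 * T^2) *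
       (\<Sum>n\<in>{1..nat \<lfloor>N\<rfloor>}. (norm (a n))^2 / (real n) powr (2 * \<sigma>))"
    unfolding Q_def[symmetric] M_def[symmetric] S_def[symmetric] .
qed

end
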